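(* For all integers $n\ge2$ and $d$, the $(n-1)\times(n-1)$ matrix $P(n,d)=\bigl(p_{n,d}(i,j)\bigr)_{i,j=1}^{n-1}$ is symmetric and Toeplitz, i.e. $p_{n,d}(i,j)=p_{n,d}(j,i)$ for all $i,j\in[n-1]$ and $p_{n,d}(i+1,j+1)=p_{n,d}(i,j)$ for all $i,j\in[n-2]$.
   Context: A cycle $(c_1c_2\cdots c_k)$ of a permutation means $c_1\mapsto c_2\mapsto\cdots\mapsto c_k\mapsto c_1$. Its cyclic descent number is $\operatorname{cdes}(c)=\lvert\{t\in[k]: c_t>c_{t+1}\}\rvert$ and its cyclic ascent number $\operatorname{casc}(c)=\lvert\{t\in[k]: c_t<c_{t+1}\}\rvert$, where $c_{k+1}=c_1$; its cyclic weight is $w(c)=\min(\operatorname{cdes}(c),\operatorname{casc}(c))$, and the cyclic weight $w(\pi)$ of a permutation $\pi$ is the sum of the cyclic weights of all its cycles. An odd order permutation is one all of whose cycles have odd length. $\mathscr{P}_{n,d}$ is the set of odd order permutations of $[n]$ with cyclic weight $d$, and $p_{n,d}(i,j)$ is the number of $\pi\in\mathscr{P}_{n,d}$ containing $i\,n\,j$ as a cyclic factor, i.e. some cycle of $\pi$, written starting at a suitable element, contains $i,n,j$ consecutively (equivalently $\pi(i)=n$ and $\pi(n)=j$). *)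

theory Defs
  imports "HOL-Combinatorics.Permutations"
begin

text \<open>The cycle of \<pi> through x is its orbit; written as (c_1 ... c_k) with c_{t+1} = \<pi> c_t,
  the positions t with c_t > c_{t+1} correspond bijectively to the elements y of the
  cycle with \<pi> y < y.\<close>

definition cycle_of :: "(nat \<Rightarrow> nat) \<Rightarrow> nat \<Rightarrow> nat set" where
  "cycle_of \<pi> x = {(\<pi> ^^ k) x | k. True}"

definition cycles_of :: "nat \<Rightarrow> (nat \<Rightarrow> nat) \<Rightarrow> nat set set" where
  "cycles_of n \<pi> = cycle_of \<pi> ` {1..n}"

definition cdes :: "(nat \<Rightarrow> nat) \<Rightarrow> nat set \<Rightarrow> nat" where
  "cdes \<pi> C = card {y \<in> C. \<pi> y < y}"

definition casc :: "(nat \<Rightarrow> nat) \<Rightarrow> nat set \<Rightarrow> nat" where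
  "casc \<pi> C = card {y \<in> C. y < \<pi> y}"

definition cyc_weight :: "(nat \<Rightarrow> nat) \<Rightarrow> nat set \<Rightarrow> nat" where
  "cyc_weight \<pi> C = min (cdes \<pi> C) (casc \<pi> C)"

definition perm_weight :: "nat \<Rightarrow> (nat \<Rightarrow> nat) \<Rightarrow> nat" where
  "perm_weight n \<pi> = (\<Sum>C\<in>cycles_of n \<pi>. cyc_weight \<pi> C)"

definition odd_order :: "nat \<Rightarrow> (nat \<Rightarrow> nat) \<Rightarrow> bool" where
  "odd_order n \<pi> \<longleftrightarrow> (\<forall>C\<in>cycles_of n \<pi>. odd (card C))"

definition P_set :: "nat \<Rightarrow> int \<Rightarrow> (nat \<Rightarrow> nat) set" where
  "P_set n d = {\<pi>. \<pi> permutes {1..n} \<and> odd_order n \<pi> \<and> int (perm_weight n \<pi>) = d}"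

definition p_count :: "nat \<Rightarrow> int \<Rightarrow> nat \<Rightarrow> nat \<Rightarrow> nat" where
  "p_count n d i j = card {\<pi> \<in> P_set n d. \<pi> i = n \<and> \<pi> n = j}"

end

theory Submission
  imports Defs "HOL-Combinatorics.Orbits"
begin

lemma cycle_of_orbit:
  assumes "permutation \<pi>" shows "cycle_of \<pi> x = orbit \<pi> x"
  unfolding cycle_of_def using orbit_altdef_permutation[OF assms] by simp

lemma orbit_sub:
  fixes n :: nat
  assumes p: "\<pi> permutes {1..n}" and x0: "x0 \<in> {1..n}"
  shows "orbit \<pi> x0 \<subseteq> {1..n}"
proof
  fix y assume "y \<in> orbit \<pi> x0"
  then show "y \<in> {1..n}"
  proof induct
    case base show ?case using x0 by (rule permutes_in_image[OF p, THEN iffD2])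
  next
    case (step y) show ?case using step(2) by (rule permutes_in_image[OF p, THEN iffD2])
  qed
qed

lemma orbit_pre:
  fixes n :: nat
  assumes p: "\<pi> permutes {1..n}" and "\<pi> a \<in> orbit \<pi> x0"
  shows "a \<in> orbit \<pi> x0"
proof -
  have perm: "permutation \<pi>" by (rule permutes_imp_permutation[OF _ p]) simp
  have cyc: "cyclic_on \<pi> (orbit \<pi> x0)"
    by (rule cyclic_on_singleI[OF permutation_self_in_orbit[OF perm]]) simp
  show ?thesis by (rule cyclic_on_f_in[OF p cyc assms(2)])
qed

lemma conj_weight:
  assumes \<sigma>: "bij \<sigma>" and S: "\<sigma> ` {1..n} = {1..n}"
    and p: "\<pi> permutes {1..n}" and p': "\<pi>' permutes {1..n}"
    and comm: "\<And>x. \<pi>' (\<sigma> x) = \<sigma> (\<pi> x)"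
    and cyc: "\<And>x0. x0 \<in> {1..n} \<Longrightarrow>
       card {x\<in>orbit \<pi> x0. \<sigma> (\<pi> x) < \<sigma> x} = card {x\<in>orbit \<pi> x0. \<pi> x < x} \<and>
       card {x\<in>orbit \<pi> x0. \<sigma> x < \<sigma> (\<pi> x)} = card {x\<in>orbit \<pi> x0. x < \<pi> x}"
  shows "perm_weight n \<pi>' = perm_weight n \<pi> \<and> (odd_order n \<pi>' \<longleftrightarrow> odd_order n \<pi>)"
proof -
  have perm: "permutation \<pi>" by (rule permutes_imp_permutation[OF _ p]) simp
  have perm': "permutation \<pi>'" by (rule permutes_imp_permutation[OF _ p']) simp
  have inj: "inj \<sigma>" using \<sigma> bij_is_inj by blast
  have orb: "orbit \<pi>' (\<sigma> x) = \<sigma> ` orbit \<pi> x" for x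
    using orbit_inverse[OF permutation_self_in_orbit[OF perm], where g'="\<pi>'" and f=\<sigma>] comm by simp
  have "cycles_of n \<pi>' = (\<lambda>x. orbit \<pi>' x) ` (\<sigma> ` {1..n})"
    unfolding cycles_of_def S using cycle_of_orbit[OF perm'] by simp
  also have "\<dots> = (\<lambda>x. \<sigma> ` orbit \<pi> x) ` {1..n}"
    by (simp add: image_image orb)
  also have "\<dots> = image \<sigma> ` cycles_of n \<pi>"
    unfolding cycles_of_def using cycle_of_orbit[OF perm] by (simp add: image_image)
  finally have ceq: "cycles_of n \<pi>' = image \<sigma> ` cycles_of n \<pi>" .
  have injI: "inj_on (image \<sigma>) X" for X
    using inj by (simp add: inj_on_def inj_image_eq_iff)
  have cw: "cyc_weight \<pi>' (\<sigma> ` C) = cyc_weight \<pi> C" if C: "C \<in> cycles_of n \<pi>" for C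
  proof -
    obtain x0 where x0: "x0 \<in> {1..n}" "C = orbit \<pi> x0"
      using C unfolding cycles_of_def using cycle_of_orbit[OF perm] by auto
    have e1: "{y\<in>\<sigma> ` C. \<pi>' y < y} = \<sigma> ` {x\<in>C. \<sigma> (\<pi> x) < \<sigma> x}"
      using comm by auto
    have e2: "{y\<in>\<sigma> ` C. y < \<pi>' y} = \<sigma> ` {x\<in>C. \<sigma> x < \<sigma> (\<pi> x)}"
      using comm by auto
    have "cdes \<pi>' (\<sigma> ` C) = cdes \<pi> C"
      unfolding cdes_def e1 using card_image[OF inj_on_subset[OF inj]] cyc[OF x0(1)] x0(2) by simp
    moreover have "casc \<pi>' (\<sigma> ` C) = casc \<pi> C"
      unfolding casc_def e2 using card_image[OF inj_on_subset[OF inj]] cyc[OF x0(1)] x0(2) by simp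
    ultimately show ?thesis unfolding cyc_weight_def by simp
  qed
  have "perm_weight n \<pi>' = (\<Sum>C\<in>cycles_of n \<pi>. cyc_weight \<pi>' (\<sigma> ` C))"
    unfolding perm_weight_def ceq by (subst sum.reindex[OF injI]) (simp add: o_def)
  also have "\<dots> = perm_weight n \<pi>"
    unfolding perm_weight_def using cw by (rule sum.cong[OF refl])
  finally have w: "perm_weight n \<pi>' = perm_weight n \<pi>" .
  have "odd_order n \<pi>' \<longleftrightarrow> odd_order n \<pi>"
    unfolding odd_order_def ceq using card_image[OF inj_on_subset[OF inj]] by simp
  with w show ?thesis by simp
qed

lemma inv_weight:
  assumes p: "\<pi> permutes {1..n}"
  shows "perm_weight n (inv \<pi>) = perm_weight n \<pi> \<and> (odd_order n (inv \<pi>) \<longleftrightarrow> odd_order n \<pi>)"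
proof -
  have perm: "permutation \<pi>" by (rule permutes_imp_permutation[OF _ p]) simp
  have perm': "permutation (inv \<pi>)" using perm permutation_inverse by blast
  have ceq: "cycles_of n (inv \<pi>) = cycles_of n \<pi>"
    unfolding cycles_of_def cycle_of_orbit[OF perm] cycle_of_orbit[OF perm'] orbit_inv_eq[OF perm] ..
  have inj: "inj \<pi>" using p permutes_inj by blast
  have cw: "cyc_weight (inv \<pi>) C = cyc_weight \<pi> C" if C: "C \<in> cycles_of n \<pi>" for C
  proof -
    obtain x0 where x0: "x0 \<in> {1..n}" "C = orbit \<pi> x0"
      using C unfolding cycles_of_def using cycle_of_orbit[OF perm] by auto
    have e1: "{y\<in>C. inv \<pi> y < y} = \<pi> ` {x\<in>C. x < \<pi> x}"
    proof (intro set_eqI iffI)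
      fix y assume y: "y \<in> {y\<in>C. inv \<pi> y < y}"
      have "\<pi> (inv \<pi> y) = y" using permutes_inverses(1)[OF p] by simp
      moreover then have "inv \<pi> y \<in> C" using orbit_pre[OF p] y x0(2) by auto
      ultimately show "y \<in> \<pi> ` {x\<in>C. x < \<pi> x}" using y by (metis (mono_tags, lifting) imageI mem_Collect_eq)
    next
      fix y assume "y \<in> \<pi> ` {x\<in>C. x < \<pi> x}"
      then show "y \<in> {y\<in>C. inv \<pi> y < y}" using permutes_inverses(2)[OF p] x0(2)
        by (auto intro: orbit.step)
    qed
    have e2: "{y\<in>C. y < inv \<pi> y} = \<pi> ` {x\<in>C. \<pi> x < x}"
    proof (intro set_eqI iffI)
      fix y assume y: "y \<in> {y\<in>C. y < inv \<pi> y}"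
      have "\<pi> (inv \<pi> y) = y" using permutes_inverses(1)[OF p] by simp
      moreover then have "inv \<pi> y \<in> C" using orbit_pre[OF p] y x0(2) by auto
      ultimately show "y \<in> \<pi> ` {x\<in>C. \<pi> x < x}" using y by (metis (mono_tags, lifting) imageI mem_Collect_eq)
    next
      fix y assume "y \<in> \<pi> ` {x\<in>C. \<pi> x < x}"
      then show "y \<in> {y\<in>C. y < inv \<pi> y}" using permutes_inverses(2)[OF p] x0(2)
        by (auto intro: orbit.step)
    qed
    have "cdes (inv \<pi>) C = casc \<pi> C"
      unfolding cdes_def casc_def e1 using card_image[OF inj_on_subset[OF inj]] by simp
    moreover have "casc (inv \<pi>) C = cdes \<pi> C"
      unfolding cdes_def casc_def e2 using card_image[OF inj_on_subset[OF inj]] by simp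
    ultimately show ?thesis unfolding cyc_weight_def by simp
  qed
  have "perm_weight n (inv \<pi>) = perm_weight n \<pi>"
    unfolding perm_weight_def ceq using cw by (rule sum.cong[OF refl])
  moreover have "odd_order n (inv \<pi>) \<longleftrightarrow> odd_order n \<pi>"
    unfolding odd_order_def ceq ..
  ultimately show ?thesis by simp
qed

definition sh :: "nat \<Rightarrow> nat \<Rightarrow> nat" where
  "sh n x = (if x = n - 1 then 1 else if 1 \<le> x \<and> x < n - 1 then x + 1 else x)"

definition ush :: "nat \<Rightarrow> nat \<Rightarrow> nat" where
  "ush n y = (if y = 1 then n - 1 else if 1 < y \<and> y \<le> n - 1 then y - 1 else y)"

lemma sh_ush: "2 \<le> n \<Longrightarrow> sh n (ush n y) = y"
  unfolding sh_def ush_def by auto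

lemma ush_sh: "2 \<le> n \<Longrightarrow> ush n (sh n x) = x"
  unfolding sh_def ush_def by auto

lemma sh_permutes:
  assumes "2 \<le> n" shows "sh n permutes {1..n}"
  unfolding permutes_def
proof (intro conjI allI impI)
  fix x assume "x \<notin> {1..n}" then show "sh n x = x" using assms unfolding sh_def by auto
next
  fix y show "\<exists>!x. sh n x = y"
    using sh_ush[OF assms] ush_sh[OF assms] by metis
qed

lemma ush_permutes:
  assumes "2 \<le> n" shows "ush n permutes {1..n}"
  unfolding permutes_def
proof (intro conjI allI impI)
  fix x assume "x \<notin> {1..n}" then show "ush n x = x" using assms unfolding ush_def by auto
next
  fix y show "\<exists>!x. ush n x = y"
    using sh_ush[OF assms] ush_sh[OF assms] by metis
qed

lemma sh_mono:
  assumes "x \<in> {1..n}" "y \<in> {1..n}" "x \<noteq> n - 1" "y \<noteq> n - 1"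
  shows "sh n x < sh n y \<longleftrightarrow> x < y"
  using assms unfolding sh_def by auto

lemma shift_cycle:
  assumes n2: "2 \<le> n" and p: "\<pi> permutes {1..n}" and a1: "\<pi> (n-1) \<noteq> n" and a2: "\<pi> n \<noteq> n-1"
    and x0: "x0 \<in> {1..n}"
  shows "card {x\<in>orbit \<pi> x0. sh n (\<pi> x) < sh n x} = card {x\<in>orbit \<pi> x0. \<pi> x < x} \<and>
         card {x\<in>orbit \<pi> x0. sh n x < sh n (\<pi> x)} = card {x\<in>orbit \<pi> x0. x < \<pi> x}"
proof -
  define C where "C = orbit \<pi> x0"
  define m where "m = n - 1"
  have Csub: "C \<subseteq> {1..n}" unfolding C_def by (rule orbit_sub[OF p x0])
  have fin: "finite C" by (rule finite_subset[OF Csub]) simp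
  have cl1: "\<pi> x \<in> C" if "x \<in> C" for x using that unfolding C_def by (rule orbit.step)
  have cl2: "a \<in> C" if "\<pi> a \<in> C" for a using that orbit_pre[OF p] unfolding C_def by blast
  have inj: "inj \<pi>" using p permutes_inj by blast
  have m1: "1 \<le> m" "m < n" using n2 unfolding m_def by auto
  show ?thesis
  proof (cases "m \<in> C \<and> \<pi> m \<noteq> m")
    case False
    have eq: "sh n (\<pi> x) < sh n x \<longleftrightarrow> \<pi> x < x" "sh n x < sh n (\<pi> x) \<longleftrightarrow> x < \<pi> x"
      if x: "x \<in> C" for x
    proof -
      have xin: "x \<in> {1..n}" "\<pi> x \<in> {1..n}" using Csub x cl1[OF x(1)] by blast+
      have key: "(x = m \<and> \<pi> x = x) \<or> (x \<noteq> m \<and> \<pi> x \<noteq> m)"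
      proof (cases "x = m")
        case True
        then have "\<pi> x = x" using False x by blast
        then show ?thesis using True by simp
      next
        case xm: False
        have pxm: "\<pi> x \<noteq> m"
        proof
          assume h: "\<pi> x = m"
          then have "m \<in> C" using cl1[OF x] by simp
          then have "\<pi> m = m" using False by blast
          then have "\<pi> x = \<pi> m" using h by simp
          then have "x = m" using inj by (simp add: inj_eq)
          then show False using xm by simp
        qed
        then show ?thesis using xm by simp
      qed
      then show "sh n (\<pi> x) < sh n x \<longleftrightarrow> \<pi> x < x" "sh n x < sh n (\<pi> x) \<longleftrightarrow> x < \<pi> x"
        using sh_mono[OF xin(2) xin(1)] sh_mono[OF xin(1) xin(2)] unfolding m_def by auto
    qed
    have "{x\<in>C. sh n (\<pi> x) < sh n x} = {x\<in>C. \<pi> x < x}" using eq by auto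
    moreover have "{x\<in>C. sh n x < sh n (\<pi> x)} = {x\<in>C. x < \<pi> x}" using eq by auto
    ultimately show ?thesis unfolding C_def by simp
  next
    case True
    note outer = True
    define a where "a = inv \<pi> m"
    have pa: "\<pi> a = m" unfolding a_def using permutes_inverses(1)[OF p] by simp
    have aC: "a \<in> C" using cl2 pa True by simp
    have am: "a \<noteq> m" using pa True by auto
    have an: "a \<noteq> n" using pa a2 unfolding m_def by auto
    have ain: "a \<in> {1..n}" using aC Csub by blast
    have a1': "1 \<le> a" "a < m" using ain am an unfolding m_def by auto
    have pmin: "\<pi> m \<in> {1..n}" using Csub cl1[of m] True by blast
    have pm: "1 \<le> \<pi> m" "\<pi> m < m" using pmin True a1 unfolding m_def by auto
    have shm: "sh n m = 1" unfolding sh_def m_def by simp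
    have shpm: "sh n (\<pi> m) = \<pi> m + 1" using pm unfolding sh_def m_def by auto
    have sha: "sh n a = a + 1" using a1' unfolding sh_def m_def by auto
    have gen: "sh n (\<pi> x) < sh n x \<longleftrightarrow> \<pi> x < x" "sh n x < sh n (\<pi> x) \<longleftrightarrow> x < \<pi> x"
      if x: "x \<in> C" "x \<noteq> m" "x \<noteq> a" for x
    proof -
      have xin: "x \<in> {1..n}" "\<pi> x \<in> {1..n}" using Csub x cl1[OF x(1)] by blast+
      have "\<pi> x \<noteq> m" using x pa inj by (metis injD)
      then show "sh n (\<pi> x) < sh n x \<longleftrightarrow> \<pi> x < x" "sh n x < sh n (\<pi> x) \<longleftrightarrow> x < \<pi> x"
        using sh_mono[OF xin(2) xin(1)] sh_mono[OF xin(1) xin(2)] x unfolding m_def by auto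
    qed
    define D where "D = {x\<in>C. \<pi> x < x}"
    define A where "A = {x\<in>C. x < \<pi> x}"
    have D': "{x\<in>C. sh n (\<pi> x) < sh n x} = insert a (D - {m})"
    proof (intro set_eqI iffI)
      fix x assume x: "x \<in> {x\<in>C. sh n (\<pi> x) < sh n x}"
      show "x \<in> insert a (D - {m})"
      proof (cases "x = m \<or> x = a")
        case True then show ?thesis using x shm shpm a1' am pm by auto
      next
        case False then show ?thesis using x gen unfolding D_def by auto
      qed
    next
      fix x assume x: "x \<in> insert a (D - {m})"
      show "x \<in> {x\<in>C. sh n (\<pi> x) < sh n x}"
      proof (cases "x = m \<or> x = a")
        case True then show ?thesis using x aC pa shm sha a1' am pm by auto
      next
        case False then show ?thesis using x gen unfolding D_def by auto
      qed
    qed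
    have A': "{x\<in>C. sh n x < sh n (\<pi> x)} = insert m (A - {a})"
    proof (intro set_eqI iffI)
      fix x assume x: "x \<in> {x\<in>C. sh n x < sh n (\<pi> x)}"
      show "x \<in> insert m (A - {a})"
      proof (cases "x = m \<or> x = a")
        case True then show ?thesis using x pa shm sha a1' am pm by auto
      next
        case False then show ?thesis using x gen unfolding A_def by auto
      qed
    next
      fix x assume x: "x \<in> insert m (A - {a})"
      show "x \<in> {x\<in>C. sh n x < sh n (\<pi> x)}"
      proof (cases "x = m \<or> x = a")
        case True then show ?thesis using x outer shm shpm a1' am pm by auto
      next
        case False then show ?thesis using x gen unfolding A_def by auto
      qed
    qed
    have mD: "m \<in> D" using True pm unfolding D_def by auto
    have aD: "a \<notin> D" using pa a1' unfolding D_def by auto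
    have aA: "a \<in> A" using aC pa a1' unfolding A_def by auto
    have mA: "m \<notin> A" using pm unfolding A_def by auto
    have fD: "finite D" "finite A" using fin unfolding D_def A_def by auto
    have c1: "card D > 0" using mD fD card_gt_0_iff by blast
    have c2: "card A > 0" using aA fD card_gt_0_iff by blast
    have "card (insert a (D - {m})) = card D"
      using aD mD fD c1 by (simp add: card_Diff_singleton)
    moreover have "card (insert m (A - {a})) = card A"
      using aA mA fD c2 by (simp add: card_Diff_singleton)
    ultimately show ?thesis using D' A' unfolding C_def D_def A_def by simp
  qed
qed

lemma conj_props:
  assumes n2: "2 \<le> n" and p: "\<pi> permutes {1..n}" and pi: "\<pi> i = n" and pn: "\<pi> n = j"
    and i: "i \<noteq> n - 1" and j: "j \<noteq> n - 1"
  shows "(sh n \<circ> (\<pi> \<circ> ush n)) permutes {1..n} \<and>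
    perm_weight n (sh n \<circ> (\<pi> \<circ> ush n)) = perm_weight n \<pi> \<and>
    (odd_order n (sh n \<circ> (\<pi> \<circ> ush n)) \<longleftrightarrow> odd_order n \<pi>)"
proof -
  have p': "(sh n \<circ> (\<pi> \<circ> ush n)) permutes {1..n}"
    by (rule permutes_compose[OF permutes_compose[OF ush_permutes[OF n2] p] sh_permutes[OF n2]])
  have inj: "inj \<pi>" using p permutes_inj by blast
  have a1: "\<pi> (n-1) \<noteq> n"
  proof
    assume "\<pi> (n-1) = n"
    then have "\<pi> (n-1) = \<pi> i" using pi by simp
    then have "n - 1 = i" using inj by (simp add: inj_eq)
    then show False using i by simp
  qed
  have a2: "\<pi> n \<noteq> n - 1" using pn j by simp
  have "perm_weight n (sh n \<circ> (\<pi> \<circ> ush n)) = perm_weight n \<pi> \<and>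
    (odd_order n (sh n \<circ> (\<pi> \<circ> ush n)) \<longleftrightarrow> odd_order n \<pi>)"
  proof (rule conj_weight[where \<sigma>="sh n"])
    show "bij (sh n)" using sh_permutes[OF n2] permutes_bij by blast
    show "sh n ` {1..n} = {1..n}" using sh_permutes[OF n2] permutes_image by blast
    show "\<pi> permutes {1..n}" by (rule p)
    show "(sh n \<circ> (\<pi> \<circ> ush n)) permutes {1..n}" by (rule p')
    show "(sh n \<circ> (\<pi> \<circ> ush n)) (sh n x) = sh n (\<pi> x)" for x
      by (simp add: ush_sh[OF n2])
    show "card {x\<in>orbit \<pi> x0. sh n (\<pi> x) < sh n x} = card {x\<in>orbit \<pi> x0. \<pi> x < x} \<and>
       card {x\<in>orbit \<pi> x0. sh n x < sh n (\<pi> x)} = card {x\<in>orbit \<pi> x0. x < \<pi> x}"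
      if "x0 \<in> {1..n}" for x0
      by (rule shift_cycle[OF n2 p a1 a2 that])
  qed
  with p' show ?thesis by simp
qed

theorem theorem3p2:
  fixes n :: nat and d :: int
  assumes "n \<ge> 2"
  shows "(\<forall>i\<in>{1..n-1}. \<forall>j\<in>{1..n-1}. p_count n d i j = p_count n d j i) \<and>
         (\<forall>i\<in>{1..n-2}. \<forall>j\<in>{1..n-2}. p_count n d (i+1) (j+1) = p_count n d i j)"
proof -
  have n2: "2 \<le> n" using assms .
  define B where "B i j = {\<pi> \<in> P_set n d. \<pi> i = n \<and> \<pi> n = j}" for i j
  have pc: "p_count n d i j = card (B i j)" for i j unfolding p_count_def B_def ..
  have finB: "finite (B i j)" for i j
  proof (rule finite_subset[OF _ finite_permutations[of "{1..n}"]])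
    show "B i j \<subseteq> {p. p permutes {1..n}}" unfolding B_def P_set_def by auto
  qed simp
  have invB: "inv \<pi> \<in> B j i" if "\<pi> \<in> B i j" for \<pi> i j
  proof -
    have p: "\<pi> permutes {1..n}" and pi: "\<pi> i = n" and pn: "\<pi> n = j"
      and oo: "odd_order n \<pi>" and w: "int (perm_weight n \<pi>) = d"
      using that unfolding B_def P_set_def by auto
    have "inv \<pi> permutes {1..n}" using permutes_inv[OF p] .
    moreover have "inv \<pi> j = n" using permutes_inv_eq[OF p] pn by blast
    moreover have "inv \<pi> n = i" using permutes_inv_eq[OF p] pi by blast
    ultimately show ?thesis using inv_weight[OF p] oo w unfolding B_def P_set_def by simp
  qed
  have le: "card (B i j) \<le> card (B j i)" for i j
  proof (rule card_inj_on_le[OF _ _ finB])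
    show "inj_on inv (B i j)"
    proof (rule inj_onI)
      fix p q assume "p \<in> B i j" "q \<in> B i j" "inv p = inv q"
      then have "p permutes {1..n}" "q permutes {1..n}" unfolding B_def P_set_def by auto
      then show "p = q" using \<open>inv p = inv q\<close> by (metis permutes_inv_inv)
    qed
    show "inv ` B i j \<subseteq> B j i" using invB by blast
  qed
  have part1: "p_count n d i j = p_count n d j i" for i j
    unfolding pc using le[of i j] le[of j i] by simp
  define cj where "cj \<pi> = sh n \<circ> (\<pi> \<circ> ush n)" for \<pi> :: "nat \<Rightarrow> nat"
  have part2: "p_count n d (i+1) (j+1) = p_count n d i j"
    if i: "i \<in> {1..n-2}" and j: "j \<in> {1..n-2}" for i j
  proof -
    have shi: "sh n i = i + 1" "sh n j = j + 1" using i j unfolding sh_def by auto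
    have ushi: "ush n (i+1) = i" "ush n (j+1) = j" using i j unfolding ush_def by auto
    have shn: "sh n n = n" "ush n n = n" using n2 unfolding sh_def ush_def by auto
    have ij: "i \<noteq> n - 1" "j \<noteq> n - 1" using i j by auto
    have fwd: "cj \<pi> \<in> B (i+1) (j+1) \<and> perm_weight n (cj \<pi>) = perm_weight n \<pi> \<and>
       (odd_order n (cj \<pi>) \<longleftrightarrow> odd_order n \<pi>)"
      if p: "\<pi> permutes {1..n}" and pi: "\<pi> i = n" and pn: "\<pi> n = j" and pb: "\<pi> \<in> P_set n d" for \<pi>
    proof -
      have cp: "cj \<pi> permutes {1..n} \<and> perm_weight n (cj \<pi>) = perm_weight n \<pi> \<and>
        (odd_order n (cj \<pi>) \<longleftrightarrow> odd_order n \<pi>)"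
        unfolding cj_def by (rule conj_props[OF n2 p pi pn ij])
      have "cj \<pi> (i+1) = n" "cj \<pi> n = j + 1" unfolding cj_def using ushi shn pi pn shi by simp_all
      then show ?thesis using cp pb unfolding B_def P_set_def by auto
    qed
    have cpw: "perm_weight n (cj \<pi>) = perm_weight n \<pi> \<and> (odd_order n (cj \<pi>) \<longleftrightarrow> odd_order n \<pi>)"
      if p: "\<pi> permutes {1..n}" and pi: "\<pi> i = n" and pn: "\<pi> n = j" for \<pi>
      using conj_props[OF n2 p pi pn ij] unfolding cj_def by simp
    have "B (i+1) (j+1) = cj ` B i j"
    proof (intro set_eqI iffI)
      fix q assume "q \<in> cj ` B i j"
      then obtain \<pi> where "\<pi> \<in> B i j" "q = cj \<pi>" by blast
      then show "q \<in> B (i+1) (j+1)" using fwd unfolding B_def P_set_def by auto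
    next
      fix q assume q: "q \<in> B (i+1) (j+1)"
      have qp: "q permutes {1..n}" "q (i+1) = n" "q n = j + 1" "odd_order n q"
        "int (perm_weight n q) = d" using q unfolding B_def P_set_def by auto
      define \<pi> where "\<pi> = ush n \<circ> (q \<circ> sh n)"
      have p: "\<pi> permutes {1..n}" unfolding \<pi>_def
        by (rule permutes_compose[OF permutes_compose[OF sh_permutes[OF n2] qp(1)] ush_permutes[OF n2]])
      have pi: "\<pi> i = n" "\<pi> n = j" unfolding \<pi>_def using shi shn qp ushi by simp_all
      have cq: "cj \<pi> = q" unfolding cj_def \<pi>_def by (rule ext) (simp add: sh_ush[OF n2] ush_sh[OF n2])
      have "\<pi> \<in> B i j" using cpw[OF p pi] cq qp p pi unfolding B_def P_set_def by auto
      then show "q \<in> cj ` B i j" using cq by blast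
    qed
    moreover have "inj_on cj (B i j)"
    proof (rule inj_onI)
      fix p q assume "cj p = cj q"
      then have "ush n \<circ> (cj p \<circ> sh n) = ush n \<circ> (cj q \<circ> sh n)" by simp
      then show "p = q" unfolding cj_def by (simp add: fun_eq_iff sh_ush[OF n2] ush_sh[OF n2])
    qed
    ultimately show ?thesis unfolding pc by (simp add: card_image)
  qed
  show ?thesis using part1 part2 by blast
qed

end
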